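(* Let $X,Y\in\mathbb R^{d\times k}$ with $X^\top X=Y^\top Y=I_k$, and let $\theta\in\mathbb R^k$ be the vector of principal angles between their column spans. If $\|\theta\|_\infty\le\frac\pi4$, then $$\frac\pi2\|R_X^{-1}(Y)\|_F\ \ge\ \frac\pi2 d_F(X,Y)\ \ge\ d_A(X,Y)\ \ge\ \frac1{\sqrt2}\|R_X^{-1}(Y)\|_F.$$
   Context: Principal angles: if $X^\top Y=U\cos(\Theta)V^\top$ is a singular value decomposition with $\Theta=\mathrm{diag}(\theta_1,\dots,\theta_k)$, $\theta_i\in[0,\pi/2]$, then $\theta=(\theta_1,\dots,\theta_k)$. The arc-length distance is $d_A(X,Y)=\|\theta\|_2$ and the projection Frobenius distance is $d_F(X,Y)=\|\sin\theta\|_2=2^{-1/2}\|XX^\top-YY^\top\|_F$. For $X^\top Y$ invertible, $R_X^{-1}(Y)=(I-XX^\top)Y(X^\top Y)^{-1}$, the inverse of the retraction $R_X(V)=(X+V)[(X+V)^\top(X+V)]^{-1/2}$ on the Grassmann manifold. *)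

theory Defs
  imports "HOL-Analysis.Analysis"
begin

text \<open>Matrices are represented as real^'c^'r (rows indexed by 'r, columns by 'c).
  The dimensions d and k are the finite index types 'd and 'k.\<close>

definition orthogonal_mat :: "real^'n^'n \<Rightarrow> bool" where
  "orthogonal_mat U \<longleftrightarrow> transpose U ** U = mat 1 \<and> U ** transpose U = mat 1"

definition diag_mat :: "real^'n \<Rightarrow> real^'n^'n" where
  "diag_mat v = (\<chi> i j. if i = j then v $ i else 0)"

definition principal_angles :: "real^'k^'d \<Rightarrow> real^'k^'d \<Rightarrow> real^'k \<Rightarrow> bool" where
  "principal_angles X Y \<theta> \<longleftrightarrow>
     (\<forall>i. 0 \<le> \<theta> $ i \<and> \<theta> $ i \<le> pi / 2) \<and>
     (\<exists>U V. orthogonal_mat U \<and> orthogonal_mat V \<and>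
        transpose X ** Y = U ** diag_mat (\<chi> i. cos (\<theta> $ i)) ** transpose V)"

definition frob_norm :: "real^'c^'r \<Rightarrow> real" where
  "frob_norm A = sqrt (\<Sum>i\<in>UNIV. \<Sum>j\<in>UNIV. (A $ i $ j)\<^sup>2)"

definition vec_norm2 :: "real^'k \<Rightarrow> real" where
  "vec_norm2 v = sqrt (\<Sum>i\<in>UNIV. (v $ i)\<^sup>2)"

text \<open>Arc-length distance d_A = ||theta||_2, projection Frobenius distance d_F = ||sin theta||_2.\<close>
definition dist_A :: "real^'k \<Rightarrow> real" where
  "dist_A \<theta> = vec_norm2 \<theta>"

definition dist_F :: "real^'k \<Rightarrow> real" where
  "dist_F \<theta> = vec_norm2 (\<chi> i. sin (\<theta> $ i))"

definition inv_retr :: "real^'k^'d \<Rightarrow> real^'k^'d \<Rightarrow> real^'k^'d" where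
  "inv_retr X Y = (mat 1 - X ** transpose X) ** Y ** matrix_inv (transpose X ** Y)"

end

theory Submission
  imports Defs
begin

lemma mm_diff_l: "(A::real^'n^'m) ** (B - C) = A ** B - A ** C"
  by (simp add: matrix_matrix_mult_def vec_eq_iff sum_subtractf algebra_simps)
lemma mm_diff_r: "((B::real^'n^'m) - C) ** A = B ** A - C ** A"
  by (simp add: matrix_matrix_mult_def vec_eq_iff sum_subtractf algebra_simps)
lemma transpose_diff: "transpose ((A::real^'n^'m) - B) = transpose A - transpose B"
  by (simp add: transpose_def vec_eq_iff)
lemma diag_mul: "diag_mat a ** diag_mat b = diag_mat (\<chi> i. a$i * b$i)"
proof -
  have "(\<Sum>k\<in>UNIV. (if i = k then a$i else 0) * (if k = j then b$k else 0)) = (if i = j then a$i * b$i else 0)" for i j :: 'a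
  proof -
    have "(\<Sum>k\<in>UNIV. (if i = k then a$i else 0) * (if k = j then b$k else 0)) = (\<Sum>k\<in>UNIV. if k = i then a$i * (if i = j then b$i else 0) else 0)"
      by (rule sum.cong) auto
    also have "\<dots> = (if i = j then a$i * b$i else 0)" by simp
    finally show ?thesis .
  qed
  then show ?thesis by (simp add: diag_mat_def matrix_matrix_mult_def vec_eq_iff)
qed
lemma diag_one: "diag_mat (\<chi> i. 1) = mat 1"
  by (simp add: diag_mat_def mat_def vec_eq_iff)
lemma diag_diff: "mat 1 - diag_mat a = diag_mat (\<chi> i. 1 - a$i)"
  by (simp add: diag_mat_def mat_def vec_eq_iff)
lemma diag_transpose: "transpose (diag_mat a) = diag_mat a"
  by (simp add: diag_mat_def transpose_def vec_eq_iff)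
lemma trace_diag: "trace (diag_mat a) = (\<Sum>i\<in>UNIV. a$i)"
  by (simp add: diag_mat_def trace_def)
lemma frob_trace: "frob_norm (A::real^'c^'r) = sqrt (trace (transpose A ** A))"
proof -
  have "trace (transpose A ** A) = (\<Sum>j\<in>UNIV. \<Sum>i\<in>UNIV. (A $ i $ j)\<^sup>2)"
    unfolding trace_def matrix_matrix_mult_def
    unfolding vec_lambda_beta
    by (rule sum.cong[OF refl], rule sum.cong[OF refl]) (simp add: transpose_def power2_eq_square)
  also have "\<dots> = (\<Sum>i\<in>UNIV. \<Sum>j\<in>UNIV. (A $ i $ j)\<^sup>2)"
    by (rule sum.swap)
  finally show ?thesis unfolding frob_norm_def by simp
qed
lemma inv_unique:
  assumes "(P::real^'n^'n) ** B = mat 1" "B ** P = mat 1"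
  shows "matrix_inv P = B"
proof -
  have ex: "\<exists>A'. P ** A' = mat 1 \<and> A' ** P = mat 1" using assms by blast
  have "P ** matrix_inv P = mat 1 \<and> matrix_inv P ** P = mat 1"
    unfolding matrix_inv_def by (rule someI_ex[OF ex])
  hence "matrix_inv P ** P = mat 1" by blast
  hence "matrix_inv P = matrix_inv P ** (P ** B)" using assms by simp
  also have "\<dots> = B" using \<open>matrix_inv P ** P = mat 1\<close> by (simp add: matrix_mul_assoc)
  finally show ?thesis .
qed

lemma x_cos_le_sin:
  fixes x :: real assumes "0 \<le> x" "x \<le> pi"
  shows "x * cos x \<le> sin x"
proof -
  let ?f = "\<lambda>x. sin x - x * cos x"
  have "?f 0 \<le> ?f x"
  proof (rule DERIV_nonneg_imp_nondecreasing[OF assms(1)])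
    fix u assume u: "0 \<le> u" "u \<le> x"
    have "DERIV ?f u :> u * sin u"
      by (auto intro!: derivative_eq_intros simp: field_simps)
    moreover have "0 \<le> u * sin u" using u assms by (simp add: sin_ge_zero)
    ultimately show "\<exists>y. DERIV ?f u :> y \<and> 0 \<le> y" by blast
  qed
  then show ?thesis by simp
qed

lemma scalar_ineqs:
  fixes x :: real assumes x: "0 \<le> x" "x \<le> pi / 4"
  shows "(sin x)\<^sup>2 \<le> (sin x / cos x)\<^sup>2"
    and "x\<^sup>2 \<le> (pi / 2)\<^sup>2 * (sin x)\<^sup>2"
    and "(sin x / cos x)\<^sup>2 \<le> 2 * x\<^sup>2"
proof -
  have "cos (pi/4) \<le> cos x" using x by (intro cos_monotone_0_pi_le) auto
  hence c1: "sqrt 2 / 2 \<le> cos x" by (simp add: cos_45)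
  have c0: "0 < cos x" using x pi_gt_zero by (intro cos_gt_zero_pi) linarith+
  have "(sqrt 2 / 2)\<^sup>2 \<le> (cos x)\<^sup>2" using c1 by (intro power_mono) auto
  hence c2: "1/2 \<le> (cos x)\<^sup>2" by (simp add: power_divide)
  have c3: "(cos x)\<^sup>2 \<le> 1" using sin_squared_eq[of x] zero_le_power2[of "sin x"] by linarith
  have s0: "0 \<le> sin x" using x by (intro sin_ge_zero) auto
  have sx: "sin x \<le> x" using x by (simp add: sin_x_le_x)
  have xs: "x * cos x \<le> sin x" using x by (intro x_cos_le_sin) auto
  have tsq: "(sin x / cos x)\<^sup>2 = (sin x)\<^sup>2 / (cos x)\<^sup>2" by (simp add: power_divide)
  show "(sin x)\<^sup>2 \<le> (sin x / cos x)\<^sup>2"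
    unfolding tsq using c0 c3 by (simp add: le_divide_eq mult_left_le)
  have "(x * cos x)\<^sup>2 \<le> (sin x)\<^sup>2"
    using xs x c0 by (intro power_mono) auto
  hence a1: "x\<^sup>2 * (cos x)\<^sup>2 \<le> (sin x)\<^sup>2" by (simp add: power_mult_distrib)
  have a2: "x\<^sup>2 * (1/2) \<le> x\<^sup>2 * (cos x)\<^sup>2" using c2 by (intro mult_left_mono) auto
  have a3: "2 \<le> (pi/2)\<^sup>2" using pi_gt3 mult_strict_mono[of 3 pi 3 pi] by (simp add: power2_eq_square)
  have a4: "2 * (sin x)\<^sup>2 \<le> (pi/2)\<^sup>2 * (sin x)\<^sup>2" using a3 by (intro mult_right_mono) auto
  show "x\<^sup>2 \<le> (pi / 2)\<^sup>2 * (sin x)\<^sup>2" using a1 a2 a4 by linarith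
  have b1: "(sin x)\<^sup>2 \<le> x\<^sup>2" using sx s0 by (intro power_mono) auto
  have b2: "2 * x\<^sup>2 * (1/2) \<le> 2 * x\<^sup>2 * (cos x)\<^sup>2" using c2 by (intro mult_left_mono) auto
  have "(sin x)\<^sup>2 \<le> 2 * x\<^sup>2 * (cos x)\<^sup>2" using b1 b2 by simp
  thus "(sin x / cos x)\<^sup>2 \<le> 2 * x\<^sup>2" unfolding tsq using c0 by (simp add: divide_le_eq)
qed

lemma main_frob:
  fixes X Y :: "real^'k^'d" and U V :: "real^'k^'k" and c e :: "real^'k"
  assumes XX: "transpose X ** X = mat 1" and YY: "transpose Y ** Y = mat 1"
    and oU: "orthogonal_mat U" and oV: "orthogonal_mat V"
    and P: "transpose X ** Y = U ** diag_mat c ** transpose V"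
    and ce: "\<And>i. c$i * e$i = 1"
  shows "frob_norm (inv_retr X Y) = sqrt (\<Sum>i\<in>UNIV. e$i * (1 - c$i * c$i) * e$i)"
proof -
  define C where "C = diag_mat c"
  define Di where "Di = diag_mat e"
  define B where "B = V ** Di ** transpose U"
  define K where "K = (mat 1 :: real^'d^'d) - X ** transpose X"
  define M where "M = K ** Y"
  have UU: "transpose U ** U = mat 1" "U ** transpose U = mat 1"
    using oU by (auto simp: orthogonal_mat_def)
  have VV: "transpose V ** V = mat 1" "V ** transpose V = mat 1"
    using oV by (auto simp: orthogonal_mat_def)
  have CD: "C ** Di = mat 1" "Di ** C = mat 1"
    unfolding C_def Di_def diag_mul using ce
    by (simp_all add: diag_one[symmetric] mult.commute)
  have CT: "transpose C = C" and DT: "transpose Di = Di"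
    by (simp_all add: C_def Di_def diag_transpose)
  have P': "transpose X ** Y = U ** C ** transpose V" using P by (simp add: C_def)
  have "transpose X ** Y ** B = U ** (C ** (transpose V ** V) ** Di) ** transpose U"
    unfolding P' B_def by (simp add: matrix_mul_assoc)
  also have "\<dots> = mat 1" using VV CD UU by simp
  finally have PB: "transpose X ** Y ** B = mat 1" .
  have "B ** (transpose X ** Y) = V ** (Di ** (transpose U ** U) ** C) ** transpose V"
    unfolding P' B_def by (simp add: matrix_mul_assoc)
  also have "\<dots> = mat 1" using VV CD UU by simp
  finally have BP: "B ** (transpose X ** Y) = mat 1" .
  have inv: "matrix_inv (transpose X ** Y) = B" by (rule inv_unique[OF PB BP])
  have R: "inv_retr X Y = M ** B" unfolding inv_retr_def inv M_def K_def ..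
  have KT: "transpose K = K" unfolding K_def by (simp add: transpose_diff matrix_transpose_mul)
  have "X ** transpose X ** (X ** transpose X) = X ** (transpose X ** X) ** transpose X"
    by (simp add: matrix_mul_assoc)
  hence XXXX: "X ** transpose X ** (X ** transpose X) = X ** transpose X" using XX by simp
  have KK: "K ** K = K" unfolding K_def by (simp add: mm_diff_l mm_diff_r XXXX)
  have "transpose M ** M = transpose Y ** (K ** K) ** Y"
    unfolding M_def by (simp add: matrix_transpose_mul KT matrix_mul_assoc)
  also have "\<dots> = transpose Y ** K ** Y" using KK by simp
  also have "\<dots> = mat 1 - transpose (transpose X ** Y) ** (transpose X ** Y)"
    unfolding K_def by (simp add: mm_diff_l mm_diff_r YY matrix_transpose_mul matrix_mul_assoc)
  also have "transpose (transpose X ** Y) ** (transpose X ** Y) = V ** (C ** (transpose U ** U) ** C) ** transpose V"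
    unfolding P' by (simp add: matrix_transpose_mul CT matrix_mul_assoc)
  also have "\<dots> = V ** (C ** C) ** transpose V" using UU by simp
  finally have MM: "transpose M ** M = mat 1 - V ** (C ** C) ** transpose V" .
  have "transpose V ** (mat 1 - V ** (C ** C) ** transpose V) ** V
        = transpose V ** V - (transpose V ** V) ** (C ** C) ** (transpose V ** V)"
    by (simp add: mm_diff_l mm_diff_r matrix_mul_assoc)
  also have "\<dots> = mat 1 - C ** C" using VV by simp
  finally have VMV: "transpose V ** (mat 1 - V ** (C ** C) ** transpose V) ** V = mat 1 - C ** C" .
  have "transpose (M ** B) ** (M ** B) = U ** Di ** (transpose V ** (transpose M ** M) ** V) ** Di ** transpose U"
    unfolding B_def by (simp add: matrix_transpose_mul DT matrix_mul_assoc)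
  also have "\<dots> = U ** (Di ** (mat 1 - C ** C) ** Di) ** transpose U"
    unfolding MM VMV by (simp add: matrix_mul_assoc)
  finally have RR: "transpose (M ** B) ** (M ** B) = U ** (Di ** (mat 1 - C ** C) ** Di) ** transpose U" .
  have "trace (U ** (Di ** (mat 1 - C ** C) ** Di) ** transpose U)
       = trace (transpose U ** (U ** (Di ** (mat 1 - C ** C) ** Di)))"
    by (rule trace_mul_sym)
  also have "\<dots> = trace (Di ** (mat 1 - C ** C) ** Di)"
    using UU by (simp add: matrix_mul_assoc)
  also have "\<dots> = (\<Sum>i\<in>UNIV. e$i * (1 - c$i * c$i) * e$i)"
    unfolding C_def Di_def by (simp add: diag_mul diag_diff trace_diag)
  finally show ?thesis unfolding R frob_trace RR by simp
qed

theorem lemma9: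
  fixes X Y :: "real^'k^'d" and \<theta> :: "real^'k"
  assumes "transpose X ** X = mat 1" and "transpose Y ** Y = mat 1"
    and "principal_angles X Y \<theta>"
    and "\<forall>i. \<bar>\<theta> $ i\<bar> \<le> pi / 4"
  shows "pi / 2 * frob_norm (inv_retr X Y) \<ge> pi / 2 * dist_F \<theta>
       \<and> pi / 2 * dist_F \<theta> \<ge> dist_A \<theta>
       \<and> dist_A \<theta> \<ge> 1 / sqrt 2 * frob_norm (inv_retr X Y)"
proof -
  from assms(3) obtain U V where th0: "\<forall>i. 0 \<le> \<theta> $ i \<and> \<theta> $ i \<le> pi / 2"
    and oU: "orthogonal_mat U" and oV: "orthogonal_mat V"
    and P: "transpose X ** Y = U ** diag_mat (\<chi> i. cos (\<theta> $ i)) ** transpose V"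
    unfolding principal_angles_def by blast
  have th: "0 \<le> \<theta> $ i" "\<theta> $ i \<le> pi / 4" for i
    using th0 assms(4) by (auto simp: abs_le_iff)
  have cpos: "0 < cos (\<theta> $ i)" for i
    using th[of i] pi_gt_zero by (intro cos_gt_zero_pi) linarith+
  define t where "t i = sin (\<theta> $ i) / cos (\<theta> $ i)" for i
  have F: "frob_norm (inv_retr X Y) = sqrt (\<Sum>i\<in>UNIV. (t i)\<^sup>2)"
  proof -
    have "frob_norm (inv_retr X Y) = sqrt (\<Sum>i\<in>UNIV. (\<chi> i. 1 / cos (\<theta> $ i))$i
            * (1 - (\<chi> i. cos (\<theta> $ i))$i * (\<chi> i. cos (\<theta> $ i))$i) * (\<chi> i. 1 / cos (\<theta> $ i))$i)"
      by (rule main_frob[OF assms(1,2) oU oV P]) (simp add: cpos less_imp_neq[symmetric])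
    also have "\<dots> = sqrt (\<Sum>i\<in>UNIV. (t i)\<^sup>2)"
    proof -
      have "1 / cos (\<theta> $ i) * (1 - cos (\<theta> $ i) * cos (\<theta> $ i)) * (1 / cos (\<theta> $ i)) = (t i)\<^sup>2" for i
        unfolding t_def using sin_squared_eq[of "\<theta> $ i"]
        by (simp add: power2_eq_square field_simps)
      thus ?thesis by simp
    qed
    finally show ?thesis .
  qed
  have DF: "dist_F \<theta> = sqrt (\<Sum>i\<in>UNIV. (sin (\<theta> $ i))\<^sup>2)"
    by (simp add: dist_F_def vec_norm2_def)
  have DA: "dist_A \<theta> = sqrt (\<Sum>i\<in>UNIV. (\<theta> $ i)\<^sup>2)"
    by (simp add: dist_A_def vec_norm2_def)
  note sc = scalar_ineqs[OF th]
  have i1: "sqrt (\<Sum>i\<in>UNIV. (sin (\<theta> $ i))\<^sup>2) \<le> sqrt (\<Sum>i\<in>UNIV. (t i)\<^sup>2)"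
    unfolding t_def by (intro real_sqrt_le_mono sum_mono sc(1))
  have "sqrt (\<Sum>i\<in>UNIV. (\<theta> $ i)\<^sup>2) \<le> sqrt (\<Sum>i\<in>UNIV. (pi/2)\<^sup>2 * (sin (\<theta> $ i))\<^sup>2)"
    by (intro real_sqrt_le_mono sum_mono sc(2))
  also have "\<dots> = pi / 2 * sqrt (\<Sum>i\<in>UNIV. (sin (\<theta> $ i))\<^sup>2)"
    by (simp add: sum_distrib_left[symmetric] real_sqrt_mult)
  finally have i2: "sqrt (\<Sum>i\<in>UNIV. (\<theta> $ i)\<^sup>2) \<le> pi / 2 * sqrt (\<Sum>i\<in>UNIV. (sin (\<theta> $ i))\<^sup>2)" .
  have "1 / sqrt 2 * sqrt (\<Sum>i\<in>UNIV. (t i)\<^sup>2) = sqrt ((\<Sum>i\<in>UNIV. (t i)\<^sup>2) / 2)"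
    by (simp add: real_sqrt_divide)
  also have "\<dots> \<le> sqrt (\<Sum>i\<in>UNIV. (\<theta> $ i)\<^sup>2)"
  proof (intro real_sqrt_le_mono)
    have "(\<Sum>i\<in>UNIV. (t i)\<^sup>2) \<le> (\<Sum>i\<in>UNIV. 2 * (\<theta> $ i)\<^sup>2)"
      unfolding t_def by (intro sum_mono sc(3))
    thus "(\<Sum>i\<in>UNIV. (t i)\<^sup>2) / 2 \<le> (\<Sum>i\<in>UNIV. (\<theta> $ i)\<^sup>2)"
      by (simp add: sum_distrib_left[symmetric])
  qed
  finally have i3: "1 / sqrt 2 * sqrt (\<Sum>i\<in>UNIV. (t i)\<^sup>2) \<le> sqrt (\<Sum>i\<in>UNIV. (\<theta> $ i)\<^sup>2)" .
  show ?thesis unfolding F DF DA using i1 i2 i3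
    by (simp add: mult_left_mono)
qed
end
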